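(* Let $n,m$ be integers with $6 \le n \le m \le 2n-2$ and $m \ne 2n-5$. If $n+m \equiv 1 \pmod 3$, then \[\gamma^{\rm ID}(K_n\times K_m) = \left\lceil \frac{2m+2n}{3}\right\rceil.\]
   Context: For a graph $G$ and vertex $x$, $N[x]$ denotes the closed neighborhood of $x$. A set $C \subseteq V(G)$ is an identifying code (ID code) of $G$ if $C$ is a dominating set of $G$ and $N[x]\cap C \ne N[y]\cap C$ for every pair of distinct vertices $x,y$. $\gamma^{\rm ID}(G)$ is the minimum cardinality of an ID code of $G$. The direct product $G_1\times G_2$ has vertex set $V(G_1)\times V(G_2)$, with $(u_1,u_2)$ adjacent to $(v_1,v_2)$ iff $u_1v_1\in E(G_1)$ and $u_2v_2 \in E(G_2)$. $K_n$ is the complete graph on vertex set $[n]=\{1,\dots,n\}$; thus in $K_n\times K_m$ two vertices are adjacent iff they differ in both coordinates. *)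

theory Defs
  imports Complex_Main
begin

text \<open>A (finite simple) graph is given by a vertex set V and a symmetric,
irreflexive adjacency relation E.\<close>

definition closed_nbhd :: "'a set \<Rightarrow> ('a \<Rightarrow> 'a \<Rightarrow> bool) \<Rightarrow> 'a \<Rightarrow> 'a set" where
  "closed_nbhd V E x = {y \<in> V. y = x \<or> E x y}"

definition is_id_code :: "'a set \<Rightarrow> ('a \<Rightarrow> 'a \<Rightarrow> bool) \<Rightarrow> 'a set \<Rightarrow> bool" where
  "is_id_code V E C \<longleftrightarrow> C \<subseteq> V
     \<and> (\<forall>x\<in>V. closed_nbhd V E x \<inter> C \<noteq> {})
     \<and> (\<forall>x\<in>V. \<forall>y\<in>V. x \<noteq> y \<longrightarrow> closed_nbhd V E x \<inter> C \<noteq> closed_nbhd V E y \<inter> C)"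

definition id_code_number :: "'a set \<Rightarrow> ('a \<Rightarrow> 'a \<Rightarrow> bool) \<Rightarrow> nat" where
  "id_code_number V E = (LEAST k. \<exists>C. is_id_code V E C \<and> card C = k)"

definition K_verts :: "nat \<Rightarrow> nat set" where "K_verts n = {1..n}"
definition K_adj :: "nat \<Rightarrow> nat \<Rightarrow> bool" where "K_adj u v \<longleftrightarrow> u \<noteq> v"

definition direct_prod_verts :: "'a set \<Rightarrow> 'b set \<Rightarrow> ('a \<times> 'b) set" where
  "direct_prod_verts V1 V2 = V1 \<times> V2"
definition direct_prod_adj :: "('a \<Rightarrow> 'a \<Rightarrow> bool) \<Rightarrow> ('b \<Rightarrow> 'b \<Rightarrow> bool)
    \<Rightarrow> 'a \<times> 'b \<Rightarrow> 'a \<times> 'b \<Rightarrow> bool" where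
  "direct_prod_adj E1 E2 u v \<longleftrightarrow> E1 (fst u) (fst v) \<and> E2 (snd u) (snd v)"

end

theory Submission
  imports Defs
begin


definition NC :: "(nat\<times>nat) set \<Rightarrow> nat\<times>nat \<Rightarrow> (nat\<times>nat) set" where
  "NC C x = {c\<in>C. c = x \<or> (fst x \<noteq> fst c \<and> snd x \<noteq> snd c)}"

definition blk :: "(nat\<times>nat) set \<Rightarrow> nat \<Rightarrow> nat \<Rightarrow> nat \<Rightarrow> nat \<Rightarrow> bool" where
  "blk C i i' j j' \<longleftrightarrow> (\<forall>p q. (p,q) \<in> C \<longrightarrow> (p = i \<or> p = i' \<or> q = j \<or> q = j')
       \<longrightarrow> ((p = i \<or> p = i') \<and> (q = j \<or> q = j')))"

lemma verts_eq: "direct_prod_verts (K_verts n) (K_verts m) = {1..n}\<times>{1..m}"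
  by (simp add: direct_prod_verts_def K_verts_def)

lemma adj_eq: "direct_prod_adj K_adj K_adj = (\<lambda>u v. fst u \<noteq> fst v \<and> snd u \<noteq> snd v)"
  by (intro ext) (simp add: direct_prod_adj_def K_adj_def)

lemma nb_eq:
  assumes "C \<subseteq> V" "x \<in> V"
  shows "closed_nbhd V (\<lambda>u v. fst u \<noteq> fst v \<and> snd u \<noteq> snd v) x \<inter> C = NC C x"
  using assms unfolding closed_nbhd_def NC_def by auto

lemma id_iff:
  assumes "C \<subseteq> V"
  shows "is_id_code V (\<lambda>u v. fst u \<noteq> fst v \<and> snd u \<noteq> snd v) C \<longleftrightarrow>
     (\<forall>x\<in>V. NC C x \<noteq> {}) \<and> (\<forall>x\<in>V. \<forall>y\<in>V. x \<noteq> y \<longrightarrow> NC C x \<noteq> NC C y)"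
  using assms by (simp add: is_id_code_def nb_eq)

lemma sep_rows:
  assumes "\<forall>j. (i,j) \<notin> C" "\<forall>j. (i',j) \<notin> C"
  shows "NC C (i,j) = NC C (i',j)"
  using assms unfolding NC_def by force

lemma sep_cols:
  assumes "\<forall>i. (i,j) \<notin> C" "\<forall>i. (i,j') \<notin> C"
  shows "NC C (i,j) = NC C (i,j')"
  using assms unfolding NC_def by force

lemma sep_blk:
  assumes "blk C i i' j j'" "i \<noteq> i'" "j \<noteq> j'"
  shows "NC C (i,j) = NC C (i',j')"
proof -
  have "c \<in> NC C (i,j) \<longleftrightarrow> c \<in> NC C (i',j')" for c
  proof (cases c)
    case (Pair p q)
    show ?thesis using assms unfolding NC_def blk_def Pair by (cases "(p,q) \<in> C") auto
  qed
  then show ?thesis by blast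
qed

lemma sep_conv:
  assumes "NC C x = NC C y" "x \<noteq> y"
  shows "(\<forall>q. (fst x,q) \<notin> C) \<and> (\<forall>q. (fst y,q) \<notin> C) \<and> fst x \<noteq> fst y
       \<or> (\<forall>p. (p,snd x) \<notin> C) \<and> (\<forall>p. (p,snd y) \<notin> C) \<and> snd x \<noteq> snd y
       \<or> (fst x \<noteq> fst y \<and> snd x \<noteq> snd y \<and> blk C (fst x) (fst y) (snd x) (snd y))"
proof -
  obtain i j i' j' where x: "x = (i,j)" and y: "y = (i',j')" by (cases x, cases y) auto
  have mem: "c \<in> C \<Longrightarrow> (c = x \<or> (i \<noteq> fst c \<and> j \<noteq> snd c)) \<longleftrightarrow> (c = y \<or> (i' \<noteq> fst c \<and> j' \<noteq> snd c))" for c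
  proof -
    assume c: "c \<in> C"
    have "c \<in> NC C x \<longleftrightarrow> c \<in> NC C y" using assms(1) by simp
    then show ?thesis using c unfolding NC_def x y by simp
  qed
  show ?thesis
  proof (cases "i = i'")
    case True
    then have "j \<noteq> j'" using assms(2) x y by auto
    have "\<forall>p. (p,j) \<notin> C" using mem[of "(_, j)"] True \<open>j \<noteq> j'\<close> x y by (metis fst_conv snd_conv)
    moreover have "\<forall>p. (p,j') \<notin> C" using mem[of "(_, j')"] True \<open>j \<noteq> j'\<close> x y by (metis fst_conv snd_conv)
    ultimately show ?thesis using x y \<open>j \<noteq> j'\<close> by auto
  next
    case False
    note ii = False
    show ?thesis
    proof (cases "j = j'")
      case True
      have "\<forall>q. (i,q) \<notin> C" using mem[of "(i, _)"] True ii x y by (metis fst_conv snd_conv)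
      moreover have "\<forall>q. (i',q) \<notin> C" using mem[of "(i', _)"] True ii x y by (metis fst_conv snd_conv)
      ultimately show ?thesis using x y ii by auto
    next
      case False
      have "blk C i i' j j'" unfolding blk_def
      proof (intro allI impI)
        fix p q assume pq: "(p,q) \<in> C" "p = i \<or> p = i' \<or> q = j \<or> q = j'"
        show "(p = i \<or> p = i') \<and> (q = j \<or> q = j')"
          using mem[OF pq(1)] pq(2) ii False x y by auto
      qed
      then show ?thesis using x y ii False by auto
    qed
  qed
qed



definition rd :: "(nat\<times>nat) set \<Rightarrow> nat \<Rightarrow> nat" where "rd C i = card {j. (i,j) \<in> C}"
definition cd :: "(nat\<times>nat) set \<Rightarrow> nat \<Rightarrow> nat" where "cd C j = card {i. (i,j) \<in> C}"

lemma fin_rs: "finite C \<Longrightarrow> finite {j. (i,j) \<in> C}"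
  by (rule finite_subset[of _ "snd ` C"]) force+

lemma fin_cs: "finite C \<Longrightarrow> finite {i. (i,j) \<in> C}"
  by (rule finite_subset[of _ "fst ` C"]) force+

lemma sum_rd:
  assumes "finite C" "finite S"
  shows "card {e\<in>C. fst e \<in> S} = (\<Sum>i\<in>S. rd C i)"
proof -
  have "{e\<in>C. fst e \<in> S} = Sigma S (\<lambda>i. {j. (i,j) \<in> C})" by auto
  then show ?thesis using assms by (simp add: rd_def fin_rs)
qed

lemma sum_cd:
  assumes "finite C" "finite S"
  shows "card {e\<in>C. snd e \<in> S} = (\<Sum>j\<in>S. cd C j)"
proof -
  have "{e\<in>C. snd e \<in> S} = (\<lambda>(j,i). (i,j)) ` Sigma S (\<lambda>j. {i. (i,j) \<in> C})" by force
  moreover have "inj_on (\<lambda>(j,i). (i,j)) (Sigma S (\<lambda>j. {i. (i,j) \<in> C}))"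
    by (auto simp: inj_on_def)
  ultimately have "card {e\<in>C. snd e \<in> S} = card (Sigma S (\<lambda>j. {i. (i,j) \<in> C}))"
    by (simp add: card_image)
  then show ?thesis using assms by (simp add: cd_def fin_cs)
qed

lemma rd_pos: "finite C \<Longrightarrow> (i,j) \<in> C \<Longrightarrow> 1 \<le> rd C i"
  unfolding rd_def using fin_rs[of C i] by (metis (mono_tags) card_0_eq empty_iff less_one mem_Collect_eq not_le)

lemma cd_pos: "finite C \<Longrightarrow> (i,j) \<in> C \<Longrightarrow> 1 \<le> cd C j"
  unfolding cd_def using fin_cs[of C j] by (metis (mono_tags) card_0_eq empty_iff less_one mem_Collect_eq not_le)

lemma rd0: "finite C \<Longrightarrow> rd C i = 0 \<Longrightarrow> (i,j) \<notin> C"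
  using rd_pos by fastforce

lemma cd0: "finite C \<Longrightarrow> cd C j = 0 \<Longrightarrow> (i,j) \<notin> C"
  using cd_pos by fastforce

lemma card1_eq: "card A = 1 \<Longrightarrow> x \<in> A \<Longrightarrow> y \<in> A \<Longrightarrow> x = y"
  by (metis card_1_singletonE singletonD)

lemma rd1: "rd C i = 1 \<Longrightarrow> (i,j) \<in> C \<Longrightarrow> (i,j') \<in> C \<Longrightarrow> j = j'"
  unfolding rd_def using card1_eq[of "{j. (i,j) \<in> C}"] by auto

lemma cd1: "cd C j = 1 \<Longrightarrow> (i,j) \<in> C \<Longrightarrow> (i',j) \<in> C \<Longrightarrow> i = i'"
  unfolding cd_def using card1_eq[of "{i. (i,j) \<in> C}"] by auto

lemma card2_other: "card A = 2 \<Longrightarrow> x \<in> A \<Longrightarrow> \<exists>y. y \<noteq> x \<and> y \<in> A \<and> (\<forall>z\<in>A. z = x \<or> z = y)"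
  unfolding card_2_iff by auto

lemma rd2: "rd C i = 2 \<Longrightarrow> (i,j) \<in> C \<Longrightarrow> \<exists>j'. j' \<noteq> j \<and> (i,j') \<in> C \<and> (\<forall>q. (i,q) \<in> C \<longrightarrow> q = j \<or> q = j')"
  unfolding rd_def using card2_other[of "{j. (i,j) \<in> C}" j] by auto

lemma cd2: "cd C j = 2 \<Longrightarrow> (i,j) \<in> C \<Longrightarrow> \<exists>i'. i' \<noteq> i \<and> (i',j) \<in> C \<and> (\<forall>p. (p,j) \<in> C \<longrightarrow> p = i \<or> p = i')"
  unfolding cd_def using card2_other[of "{i. (i,j) \<in> C}" i] by auto


lemma arith_final:
  fixes ir ic k a b h hr hc Dr Dc n m E t :: nat
  assumes eq: "E = k+a+b+h" "n = ir + (k+a) + hr" "m = ic + (k+b) + hc"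
    "b + h = Dr + 2*hr" "a + h = Dc + 2*hc" and b: "ir \<le> 1" "ic \<le> 1" "k \<le> 1"
    "\<not>(1 \<le> ir \<and> 1 \<le> ic \<and> 1 \<le> k)" and s2: "1 \<le> ir \<Longrightarrow> hr \<le> Dr + h" "1 \<le> ic \<Longrightarrow> hc \<le> Dc + h"
    and s3: "\<not>(Dr=0 \<and> Dc = 0 \<and> h = 1)" and s4: "hr = 0 \<Longrightarrow> Dr = 0" "hc = 0 \<Longrightarrow> Dc = 0"
    and h: "6 \<le> n" "n \<le> m" "m + 2 \<le> 2*n" "m + 5 \<noteq> 2*n" "n+m = 3*t+1"
  shows "2*(n+m)+1 \<le> 3*E"
proof (rule ccontr)
  assume "\<not> 2*(n+m)+1 \<le> 3*E"
  then have "3*E \<le> 6*t+2" using h(5) by presburger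
  then have E2: "E \<le> 2*t" by presburger
  have iden: "3*E + 2*ir + 2*ic + k = 6*t + 2 + Dr + Dc + h" using eq h(5) by linarith
  have c: "ir = 0 \<or> ir = 1" "ic = 0 \<or> ic = 1" "k = 0 \<or> k = 1" using b by auto
  have m5: "m + 5 < 2*n \<or> m + 5 > 2*n" using h(4) by linarith
  show False
  proof (cases "ir = 1")
    case ir1: True
    show False
    proof (cases "ic = 1")
      case ic1: True
      then have k0: "k = 0" using b ir1 by auto
      have "Dr + Dc + h + 2 \<le> 4" using iden E2 ir1 ic1 k0 by linarith
      then show False using eq s2(1)[OF eq_refl[OF ir1[symmetric]]] s2(2)[OF eq_refl[OF ic1[symmetric]]] ir1 ic1 k0 h(1,2,3,5) by linarith
    next
      case ic0: False
      then have ic0: "ic = 0" using c by auto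
      show False
      proof (cases "k = 1")
        case k1: True
        have s: "Dr + Dc + h = 1"
        proof -
          have "3*E + 1 = 6*t + Dr + Dc + h" using iden ir1 ic0 k1 by linarith
          then show ?thesis using E2 by presburger
        qed
        then have "(Dr = 1 \<and> Dc = 0 \<and> h = 0) \<or> (Dr = 0 \<and> Dc = 1 \<and> h = 0) \<or> (Dr = 0 \<and> Dc = 0 \<and> h = 1)" by auto
        then show False using eq s2(1)[OF eq_refl[OF ir1[symmetric]]] s3 s4 ir1 ic0 k1 h(1,2,3,5) by (elim disjE) linarith+
      next
        case k0: False
        then have k0: "k = 0" using c by auto
        have "Dr + Dc + h = 0" using iden E2 ir1 ic0 k0 by linarith
        then show False using eq s2(1)[OF eq_refl[OF ir1[symmetric]]] ir1 ic0 k0 h(1,2,3,5) by linarith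
      qed
    qed
  next
    case ir0: False
    then have ir0: "ir = 0" using c by auto
    show False
    proof (cases "ic = 1")
      case ic1: True
      show False
      proof (cases "k = 1")
        case k1: True
        have s: "Dr + Dc + h = 1"
        proof -
          have "3*E + 1 = 6*t + Dr + Dc + h" using iden ir0 ic1 k1 by linarith
          then show ?thesis using E2 by presburger
        qed
        then have "(Dr = 1 \<and> Dc = 0 \<and> h = 0) \<or> (Dr = 0 \<and> Dc = 1 \<and> h = 0) \<or> (Dr = 0 \<and> Dc = 0 \<and> h = 1)" by auto
        then show False
        proof (elim disjE)
          assume "Dr = 1 \<and> Dc = 0 \<and> h = 0" then show False using eq s2(2)[OF eq_refl[OF ic1[symmetric]]] ir0 ic1 k1 h(1,2,3,5) by linarith
        next
          assume a: "Dr = 0 \<and> Dc = 1 \<and> h = 0"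
          then have "hc \<noteq> 0" using s4 by auto
          then have "hc = 1" using a s2(2)[OF eq_refl[OF ic1[symmetric]]] by linarith
          then show False using a eq ir0 ic1 k1 h(1,2,3,5) m5 by linarith
        next
          assume "Dr = 0 \<and> Dc = 0 \<and> h = 1" then show False using s3 by blast
        qed
      next
        case k0: False
        then have k0: "k = 0" using c by auto
        have "Dr + Dc + h = 0" using iden E2 ir0 ic1 k0 by linarith
        then show False using eq s2(2)[OF eq_refl[OF ic1[symmetric]]] ir0 ic1 k0 h(1,2,3,5) by linarith
      qed
    next
      case ic0: False
      then have ic0: "ic = 0" using c by auto
      show False using iden E2 ir0 ic0 b(3) by linarith
    qed
  qed
qed


lemma lower:
  fixes n m :: nat and C :: "(nat\<times>nat) set"
  assumes CV: "C \<subseteq> {1..n}\<times>{1..m}"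
    and H1: "\<And>i i'. i\<in>{1..n} \<Longrightarrow> i'\<in>{1..n} \<Longrightarrow> i\<noteq>i' \<Longrightarrow> \<forall>j. (i,j)\<notin>C \<Longrightarrow> \<forall>j. (i',j)\<notin>C \<Longrightarrow> False"
    and H2: "\<And>j j'. j\<in>{1..m} \<Longrightarrow> j'\<in>{1..m} \<Longrightarrow> j\<noteq>j' \<Longrightarrow> \<forall>i. (i,j)\<notin>C \<Longrightarrow> \<forall>i. (i,j')\<notin>C \<Longrightarrow> False"
    and H3: "\<And>i i' j j'. i\<in>{1..n} \<Longrightarrow> i'\<in>{1..n} \<Longrightarrow> j\<in>{1..m} \<Longrightarrow> j'\<in>{1..m} \<Longrightarrow> i\<noteq>i' \<Longrightarrow> j\<noteq>j' \<Longrightarrow> blk C i i' j j' \<Longrightarrow> False"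
    and hyps: "6 \<le> n" "n \<le> m" "m \<le> 2*n-2" "m \<noteq> 2*n-5" "(n+m) mod 3 = 1"
  shows "2*(n+m)+1 \<le> 3*card C"
proof -
  have fC: "finite C" using CV finite_subset by blast
  define R where "R = {1..n::nat}"
  define Q where "Q = {1..m::nat}"
  define Ir where "Ir = {i\<in>R. rd C i = 0}"
  define R1 where "R1 = {i\<in>R. rd C i = 1}"
  define Hr where "Hr = {i\<in>R. 2 \<le> rd C i}"
  define Ic where "Ic = {j\<in>Q. cd C j = 0}"
  define Q1 where "Q1 = {j\<in>Q. cd C j = 1}"
  define Hc where "Hc = {j\<in>Q. 2 \<le> cd C j}"
  define KK where "KK = {e\<in>C. rd C (fst e) = 1 \<and> cd C (snd e) = 1}"
  define LH where "LH = {e\<in>C. rd C (fst e) = 1 \<and> 2 \<le> cd C (snd e)}"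
  define HL where "HL = {e\<in>C. 2 \<le> rd C (fst e) \<and> cd C (snd e) = 1}"
  define HH where "HH = {e\<in>C. 2 \<le> rd C (fst e) \<and> 2 \<le> cd C (snd e)}"
  define Dr where "Dr = (\<Sum>i\<in>Hr. rd C i - 2)"
  define Dc where "Dc = (\<Sum>j\<in>Hc. cd C j - 2)"
  have fR: "finite R" "finite Q" "finite Ir" "finite R1" "finite Hr" "finite Ic" "finite Q1" "finite Hc"
    by (auto simp: R_def Q_def Ir_def R1_def Hr_def Ic_def Q1_def Hc_def)
  have fE: "finite KK" "finite LH" "finite HL" "finite HH"
    using fC by (auto simp: KK_def LH_def HL_def HH_def)
  have pos: "e \<in> C \<Longrightarrow> 1 \<le> rd C (fst e) \<and> 1 \<le> cd C (snd e)" for e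
    using rd_pos[OF fC] cd_pos[OF fC] by (cases e) auto
  have inR: "(p,q) \<in> C \<Longrightarrow> p \<in> R \<and> q \<in> Q" for p q
    using CV by (auto simp: R_def Q_def)
  have e1: "card C = card KK + card LH + card HL + card HH"
  proof -
    have CU: "C = KK \<union> LH \<union> HL \<union> HH"
    proof
      show "C \<subseteq> KK \<union> LH \<union> HL \<union> HH"
      proof
        fix e assume e: "e \<in> C"
        have "rd C (fst e) = 1 \<or> 2 \<le> rd C (fst e)" "cd C (snd e) = 1 \<or> 2 \<le> cd C (snd e)"
          using pos[OF e] by auto
        then show "e \<in> KK \<union> LH \<union> HL \<union> HH" using e by (auto simp: KK_def LH_def HL_def HH_def)
      qed
    qed (auto simp: KK_def LH_def HL_def HH_def)
    have d1: "KK \<inter> LH = {}" "(KK \<union> LH) \<inter> HL = {}" "(KK \<union> LH \<union> HL) \<inter> HH = {}"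
      by (auto simp: KK_def LH_def HL_def HH_def)
    have "card (KK \<union> LH \<union> HL \<union> HH) = card KK + card LH + card HL + card HH"
      using fE d1 by (simp add: card_Un_disjoint)
    then show ?thesis using CU by simp
  qed
  have e2: "n = card Ir + card R1 + card Hr"
  proof -
    have "R = Ir \<union> R1 \<union> Hr" by (auto simp: Ir_def R1_def Hr_def)
    moreover have "Ir \<inter> R1 = {}" "(Ir \<union> R1) \<inter> Hr = {}" by (auto simp: Ir_def R1_def Hr_def)
    ultimately have "card R = card Ir + card R1 + card Hr" using fR by (simp add: card_Un_disjoint)
    then show ?thesis by (simp add: R_def)
  qed
  have e4: "m = card Ic + card Q1 + card Hc"
  proof -
    have "Q = Ic \<union> Q1 \<union> Hc" by (auto simp: Ic_def Q1_def Hc_def)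
    moreover have "Ic \<inter> Q1 = {}" "(Ic \<union> Q1) \<inter> Hc = {}" by (auto simp: Ic_def Q1_def Hc_def)
    ultimately have "card Q = card Ic + card Q1 + card Hc" using fR by (simp add: card_Un_disjoint)
    then show ?thesis by (simp add: Q_def)
  qed
  have e3: "card R1 = card KK + card LH"
  proof -
    have "card R1 = (\<Sum>i\<in>R1. rd C i)" by (simp add: R1_def)
    also have "\<dots> = card {e\<in>C. fst e \<in> R1}" using sum_rd[OF fC fR(4)] by simp
    also have "{e\<in>C. fst e \<in> R1} = KK \<union> LH"
    proof
      show "{e\<in>C. fst e \<in> R1} \<subseteq> KK \<union> LH"
      proof
        fix e assume e: "e \<in> {e\<in>C. fst e \<in> R1}"
        have "cd C (snd e) = 1 \<or> 2 \<le> cd C (snd e)" using pos[of e] e by force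
        then show "e \<in> KK \<union> LH" using e by (auto simp: KK_def LH_def R1_def)
      qed
      show "KK \<union> LH \<subseteq> {e\<in>C. fst e \<in> R1}"
        using inR by (auto simp: KK_def LH_def R1_def)
    qed
    also have "card (KK \<union> LH) = card KK + card LH"
      using fE by (subst card_Un_disjoint) (auto simp: KK_def LH_def)
    finally show ?thesis .
  qed
  have e5: "card Q1 = card KK + card HL"
  proof -
    have "card Q1 = (\<Sum>j\<in>Q1. cd C j)" by (simp add: Q1_def)
    also have "\<dots> = card {e\<in>C. snd e \<in> Q1}" using sum_cd[OF fC fR(7)] by simp
    also have "{e\<in>C. snd e \<in> Q1} = KK \<union> HL"
    proof
      show "{e\<in>C. snd e \<in> Q1} \<subseteq> KK \<union> HL"
      proof
        fix e assume e: "e \<in> {e\<in>C. snd e \<in> Q1}"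
        have "rd C (fst e) = 1 \<or> 2 \<le> rd C (fst e)" using pos[of e] e by force
        then show "e \<in> KK \<union> HL" using e by (auto simp: KK_def HL_def Q1_def)
      qed
      show "KK \<union> HL \<subseteq> {e\<in>C. snd e \<in> Q1}"
        using inR by (auto simp: KK_def HL_def Q1_def)
    qed
    also have "card (KK \<union> HL) = card KK + card HL"
      using fE by (subst card_Un_disjoint) (auto simp: KK_def HL_def)
    finally show ?thesis .
  qed
  have e6: "card HL + card HH = Dr + 2*card Hr"
  proof -
    have "(\<Sum>i\<in>Hr. rd C i) = (\<Sum>i\<in>Hr. (rd C i - 2) + 2)" by (rule sum.cong) (auto simp: Hr_def)
    also have "\<dots> = Dr + 2*card Hr" unfolding Dr_def sum.distrib by simp
    finally have s: "(\<Sum>i\<in>Hr. rd C i) = Dr + 2*card Hr" .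
    have "(\<Sum>i\<in>Hr. rd C i) = card {e\<in>C. fst e \<in> Hr}" using sum_rd[OF fC fR(5)] by simp
    also have "{e\<in>C. fst e \<in> Hr} = HL \<union> HH"
    proof
      show "{e\<in>C. fst e \<in> Hr} \<subseteq> HL \<union> HH"
      proof
        fix e assume e: "e \<in> {e\<in>C. fst e \<in> Hr}"
        have "cd C (snd e) = 1 \<or> 2 \<le> cd C (snd e)" using pos[of e] e by force
        then show "e \<in> HL \<union> HH" using e by (auto simp: HL_def HH_def Hr_def)
      qed
      show "HL \<union> HH \<subseteq> {e\<in>C. fst e \<in> Hr}"
        using inR by (auto simp: HL_def HH_def Hr_def)
    qed
    also have "card (HL \<union> HH) = card HL + card HH"
      using fE by (subst card_Un_disjoint) (auto simp: HL_def HH_def)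
    finally show ?thesis using s by simp
  qed
  have e7: "card LH + card HH = Dc + 2*card Hc"
  proof -
    have "(\<Sum>j\<in>Hc. cd C j) = (\<Sum>j\<in>Hc. (cd C j - 2) + 2)" by (rule sum.cong) (auto simp: Hc_def)
    also have "\<dots> = Dc + 2*card Hc" unfolding Dc_def sum.distrib by simp
    finally have s: "(\<Sum>j\<in>Hc. cd C j) = Dc + 2*card Hc" .
    have "(\<Sum>j\<in>Hc. cd C j) = card {e\<in>C. snd e \<in> Hc}" using sum_cd[OF fC fR(8)] by simp
    also have "{e\<in>C. snd e \<in> Hc} = LH \<union> HH"
    proof
      show "{e\<in>C. snd e \<in> Hc} \<subseteq> LH \<union> HH"
      proof
        fix e assume e: "e \<in> {e\<in>C. snd e \<in> Hc}"
        have "rd C (fst e) = 1 \<or> 2 \<le> rd C (fst e)" using pos[of e] e by force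
        then show "e \<in> LH \<union> HH" using e by (auto simp: LH_def HH_def Hc_def)
      qed
      show "LH \<union> HH \<subseteq> {e\<in>C. snd e \<in> Hc}"
        using inR by (auto simp: LH_def HH_def Hc_def)
    qed
    also have "card (LH \<union> HH) = card LH + card HH"
      using fE by (subst card_Un_disjoint) (auto simp: LH_def HH_def)
    finally show ?thesis using s by simp
  qed
  have rng: "(p,q) \<in> C \<Longrightarrow> p \<in> {1..n} \<and> q \<in> {1..m}" for p q using inR by (simp add: R_def Q_def)
  have s1a: "card Ir \<le> 1"
  proof -
    have "\<forall>x\<in>Ir. \<forall>y\<in>Ir. x = y"
    proof (intro ballI, rule ccontr)
      fix x y assume xy: "x \<in> Ir" "y \<in> Ir" "x \<noteq> y"
      show False using H1[of x y] xy rd0[OF fC] by (auto simp: Ir_def R_def)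
    qed
    then show ?thesis using fR(3) card_le_Suc0_iff_eq by auto
  qed
  have s1b: "card Ic \<le> 1"
  proof -
    have "\<forall>x\<in>Ic. \<forall>y\<in>Ic. x = y"
    proof (intro ballI, rule ccontr)
      fix x y assume xy: "x \<in> Ic" "y \<in> Ic" "x \<noteq> y"
      show False using H2[of x y] xy cd0[OF fC] by (auto simp: Ic_def Q_def)
    qed
    then show ?thesis using fR(6) card_le_Suc0_iff_eq by auto
  qed
  have s1c: "card KK \<le> 1"
  proof -
    have "\<forall>x\<in>KK. \<forall>y\<in>KK. x = y"
    proof (intro ballI, rule ccontr)
      fix x y assume xy: "x \<in> KK" "y \<in> KK" "x \<noteq> y"
      obtain i j i' j' where x: "x = (i,j)" and y: "y = (i',j')" by (cases x, cases y) auto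
      have c: "(i,j) \<in> C" "(i',j') \<in> C" "rd C i = 1" "cd C j = 1" "rd C i' = 1" "cd C j' = 1"
        using xy x y by (auto simp: KK_def)
      have ii: "i \<noteq> i'"
      proof
        assume "i = i'"
        then have "j = j'" using rd1[OF c(3) c(1), of j'] c(2) by simp
        then show False using \<open>i = i'\<close> xy(3) x y by simp
      qed
      have jj: "j \<noteq> j'"
      proof
        assume "j = j'"
        then have "i = i'" using cd1[OF c(4) c(1), of i'] c(2) by simp
        then show False using ii by simp
      qed
      have "blk C i i' j j'" unfolding blk_def
      proof (intro allI impI)
        fix p q assume pq: "(p,q) \<in> C" "p = i \<or> p = i' \<or> q = j \<or> q = j'"
        from pq(2) show "(p = i \<or> p = i') \<and> (q = j \<or> q = j')"
        proof (elim disjE)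
          assume "p = i" then show ?thesis using rd1[OF c(3) c(1), of q] pq(1) by simp
        next
          assume "p = i'" then show ?thesis using rd1[OF c(5) c(2), of q] pq(1) by simp
        next
          assume "q = j" then show ?thesis using cd1[OF c(4) c(1), of p] pq(1) by simp
        next
          assume "q = j'" then show ?thesis using cd1[OF c(6) c(2), of p] pq(1) by simp
        qed
      qed
      then show False using H3[OF _ _ _ _ ii jj] rng c by blast
    qed
    then show ?thesis using fE(1) card_le_Suc0_iff_eq by auto
  qed
  have s1d: "\<not> (1 \<le> card Ir \<and> 1 \<le> card Ic \<and> 1 \<le> card KK)"
  proof
    assume a: "1 \<le> card Ir \<and> 1 \<le> card Ic \<and> 1 \<le> card KK"
    then have "Ir \<noteq> {}" "Ic \<noteq> {}" "KK \<noteq> {}" by auto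
    then obtain r0 c0 e where r0: "r0 \<in> Ir" and c0: "c0 \<in> Ic" and e: "e \<in> KK" by blast
    obtain i j where ij: "e = (i,j)" by (cases e)
    have c: "(i,j) \<in> C" "rd C i = 1" "cd C j = 1" using e ij by (auto simp: KK_def)
    have r: "rd C r0 = 0" "r0 \<in> {1..n}" using r0 by (auto simp: Ir_def R_def)
    have cc: "cd C c0 = 0" "c0 \<in> {1..m}" using c0 by (auto simp: Ic_def Q_def)
    have ii: "i \<noteq> r0" using c r by auto
    have jj: "j \<noteq> c0" using c cc by auto
    have "blk C i r0 j c0" unfolding blk_def
      using rd1[OF c(2) c(1)] cd1[OF c(3) c(1)] rd0[OF fC r(1)] cd0[OF fC cc(1)] by blast
    then show False using H3[OF _ _ _ _ ii jj] rng c r cc by blast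
  qed
  have s2a: "1 \<le> card Ir \<Longrightarrow> card Hr \<le> Dr + card HH"
  proof -
    assume "1 \<le> card Ir"
    then have "Ir \<noteq> {}" by auto
    then obtain r0 where r0: "r0 \<in> Ir" by blast
    have r: "rd C r0 = 0" "r0 \<in> {1..n}" using r0 by (auto simp: Ir_def R_def)
    define H3r where "H3r = {i\<in>Hr. 3 \<le> rd C i}"
    have sub: "Hr \<subseteq> H3r \<union> fst ` HH"
    proof
      fix u assume u: "u \<in> Hr"
      show "u \<in> H3r \<union> fst ` HH"
      proof (rule ccontr)
        assume nu: "u \<notin> H3r \<union> fst ` HH"
        have u2: "rd C u = 2" using u nu by (auto simp: H3r_def Hr_def)
        obtain j where j: "(u,j) \<in> C"
          using u2 unfolding rd_def by (metis (mono_tags) card.empty empty_Collect_eq zero_neq_numeral)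
        obtain j' where j': "j' \<noteq> j" "(u,j') \<in> C" "\<forall>q. (u,q) \<in> C \<longrightarrow> q = j \<or> q = j'"
          using rd2[OF u2 j] by blast
        have "\<not> 2 \<le> cd C j" using nu j u2 unfolding HH_def by (metis (mono_tags, lifting) fst_conv image_eqI mem_Collect_eq UnI2 order_refl snd_conv)
        then have cj: "cd C j = 1" using pos[of "(u,j)"] j by auto
        have "\<not> 2 \<le> cd C j'" using nu j' u2 unfolding HH_def by (metis (mono_tags, lifting) fst_conv image_eqI mem_Collect_eq UnI2 order_refl snd_conv)
        then have cj': "cd C j' = 1" using pos[of "(u,j')"] j' by auto
        have ur: "u \<noteq> r0" using u2 r by auto
        have "blk C u r0 j j'" unfolding blk_def
          using j'(3) rd0[OF fC r(1)] cd1[OF cj j] cd1[OF cj' j'(2)] by blast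
        then show False using H3[OF _ _ _ _ ur j'(1)[symmetric]] rng j j' r by blast
      qed
    qed
    have fH3: "finite H3r" using fR(5) by (simp add: H3r_def)
    have "card Hr \<le> card (H3r \<union> fst ` HH)" using sub fE fH3 by (intro card_mono) auto
    also have "\<dots> \<le> card H3r + card (fst ` HH)" by (rule card_Un_le)
    also have "card (fst ` HH) \<le> card HH" using fE(4) by (rule card_image_le)
    also have "card H3r \<le> Dr"
    proof -
      have fH3: "finite H3r" using fR(5) by (simp add: H3r_def)
      have "card H3r = (\<Sum>i\<in>H3r. 1)" by simp
      also have "\<dots> \<le> (\<Sum>i\<in>H3r. rd C i - 2)" by (rule sum_mono) (auto simp: H3r_def)
      also have "\<dots> \<le> Dr" unfolding Dr_def using fR(5) by (intro sum_mono2) (auto simp: H3r_def)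
      finally show ?thesis .
    qed
    finally show ?thesis by simp
  qed
  have s2b: "1 \<le> card Ic \<Longrightarrow> card Hc \<le> Dc + card HH"
  proof -
    assume "1 \<le> card Ic"
    then have "Ic \<noteq> {}" by auto
    then obtain c0 where c0: "c0 \<in> Ic" by blast
    have r: "cd C c0 = 0" "c0 \<in> {1..m}" using c0 by (auto simp: Ic_def Q_def)
    define H3c where "H3c = {j\<in>Hc. 3 \<le> cd C j}"
    have sub: "Hc \<subseteq> H3c \<union> snd ` HH"
    proof
      fix u assume u: "u \<in> Hc"
      show "u \<in> H3c \<union> snd ` HH"
      proof (rule ccontr)
        assume nu: "u \<notin> H3c \<union> snd ` HH"
        have u2: "cd C u = 2" using u nu by (auto simp: H3c_def Hc_def)
        obtain i where j: "(i,u) \<in> C"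
          using u2 unfolding cd_def by (metis (mono_tags) card.empty empty_Collect_eq zero_neq_numeral)
        obtain i' where j': "i' \<noteq> i" "(i',u) \<in> C" "\<forall>p. (p,u) \<in> C \<longrightarrow> p = i \<or> p = i'"
          using cd2[OF u2 j] by blast
        have "\<not> 2 \<le> rd C i" using nu j u2 unfolding HH_def by (metis (mono_tags, lifting) fst_conv image_eqI mem_Collect_eq UnI2 order_refl snd_conv)
        then have cj: "rd C i = 1" using pos[of "(i,u)"] j by auto
        have "\<not> 2 \<le> rd C i'" using nu j' u2 unfolding HH_def by (metis (mono_tags, lifting) fst_conv image_eqI mem_Collect_eq UnI2 order_refl snd_conv)
        then have cj': "rd C i' = 1" using pos[of "(i',u)"] j' by auto
        have ur: "u \<noteq> c0" using u2 r by auto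
        have "blk C i i' u c0" unfolding blk_def
          using j'(3) cd0[OF fC r(1)] rd1[OF cj j] rd1[OF cj' j'(2)] by blast
        then show False using H3[OF _ _ _ _ j'(1)[symmetric] ur] rng j j' r by blast
      qed
    qed
    have fH3: "finite H3c" using fR(8) by (simp add: H3c_def)
    have "card Hc \<le> card (H3c \<union> snd ` HH)" using sub fE fH3 by (intro card_mono) auto
    also have "\<dots> \<le> card H3c + card (snd ` HH)" by (rule card_Un_le)
    also have "card (snd ` HH) \<le> card HH" using fE(4) by (rule card_image_le)
    also have "card H3c \<le> Dc"
    proof -
      have "card H3c = (\<Sum>i\<in>H3c. 1)" by simp
      also have "\<dots> \<le> (\<Sum>i\<in>H3c. cd C i - 2)" by (rule sum_mono) (auto simp: H3c_def)
      also have "\<dots> \<le> Dc" unfolding Dc_def using fR(8) by (intro sum_mono2) (auto simp: H3c_def)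
      finally show ?thesis .
    qed
    finally show ?thesis by simp
  qed
  have s3: "\<not> (Dr = 0 \<and> Dc = 0 \<and> card HH = 1)"
  proof
    assume a: "Dr = 0 \<and> Dc = 0 \<and> card HH = 1"
    have allr: "\<forall>i\<in>Hr. rd C i = 2" using a fR(5) unfolding Dr_def Hr_def by auto
    have allc: "\<forall>j\<in>Hc. cd C j = 2" using a fR(8) unfolding Dc_def Hc_def by auto
    obtain u v where HH1: "HH = {(u,v)}" using a by (metis card_1_singletonE surj_pair)
    have "(u,v) \<in> HH" using HH1 by simp
    then have uv: "(u,v) \<in> C" "2 \<le> rd C u" "2 \<le> cd C v" by (auto simp: HH_def)
    have u2: "rd C u = 2" using allr uv inR by (auto simp: Hr_def)
    have v2: "cd C v = 2" using allc uv inR by (auto simp: Hc_def)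
    obtain c where c: "c \<noteq> v" "(u,c) \<in> C" "\<forall>q. (u,q) \<in> C \<longrightarrow> q = v \<or> q = c"
      using rd2[OF u2 uv(1)] by blast
    obtain r where r: "r \<noteq> u" "(r,v) \<in> C" "\<forall>p. (p,v) \<in> C \<longrightarrow> p = u \<or> p = r"
      using cd2[OF v2 uv(1)] by blast
    have "(u,c) \<notin> HH" using HH1 c by auto
    then have cc: "cd C c = 1" using c(2) uv(2) pos[of "(u,c)"] by (auto simp: HH_def)
    have "(r,v) \<notin> HH" using HH1 r by auto
    then have rr: "rd C r = 1" using r(2) uv(3) pos[of "(r,v)"] by (auto simp: HH_def)
    have "blk C u r v c" unfolding blk_def
      using c(3) r(3) rd1[OF rr r(2)] cd1[OF cc c(2)] by blast
    then show False using H3[OF _ _ _ _ r(1)[symmetric] c(1)[symmetric]] rng uv c r by blast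
  qed
  have s4a: "card Hr = 0 \<Longrightarrow> Dr = 0" using fR(5) by (simp add: Dr_def)
  have s4b: "card Hc = 0 \<Longrightarrow> Dc = 0" using fR(8) by (simp add: Dc_def)
  obtain t where t: "n + m = 3*t+1" using hyps(5) by (metis div_mult_mod_eq add.commute mult.commute)
  have e23: "n = card Ir + (card KK + card LH) + card Hr" using e2 e3 by simp
  have e45: "m = card Ic + (card KK + card HL) + card Hc" using e4 e5 by simp
  have h3: "m + 2 \<le> 2*n" "m + 5 \<noteq> 2*n" using hyps by auto
  show ?thesis
    by (rule arith_final[where ir = "card Ir" and ic = "card Ic" and k = "card KK" and a = "card LH"
        and b = "card HL" and h = "card HH" and hr = "card Hr" and hc = "card Hc" and Dr = Dr and Dc = Dc and t = t,
        OF e1 e23 e45 e6 e7 s1a s1b s1c s1d s2a s2b s3 s4a s4b hyps(1,2) h3 t])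
qed



lemma sub2: "A \<subseteq> {x,y} \<Longrightarrow> 2 \<le> card A \<Longrightarrow> x \<in> A \<and> y \<in> A"
proof (rule ccontr)
  assume a: "A \<subseteq> {x,y}" "2 \<le> card A" "\<not> (x \<in> A \<and> y \<in> A)"
  then have "A \<subseteq> {x} \<or> A \<subseteq> {y}" by auto
  then have "card A \<le> 1"
  proof
    assume "A \<subseteq> {x}" then have "card A \<le> card {x}" by (intro card_mono) auto
    then show ?thesis by simp
  next
    assume "A \<subseteq> {y}" then have "card A \<le> card {y}" by (intro card_mono) auto
    then show ?thesis by simp
  qed
  then show False using a by simp
qed

lemma two_le_card: "finite A \<Longrightarrow> x \<in> A \<Longrightarrow> y \<in> A \<Longrightarrow> x \<noteq> y \<Longrightarrow> 2 \<le> card A"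
proof -
  assume "finite A" "x \<in> A" "y \<in> A" "x \<noteq> y"
  then have "card {x,y} \<le> card A" by (intro card_mono) auto
  then show ?thesis using \<open>x \<noteq> y\<close> by simp
qed

lemma noblk:
  assumes fC: "finite C"
    and st: "\<And>p q. (p,q) \<in> C \<Longrightarrow> (rd C p = 1 \<and> 2 \<le> cd C q) \<or> (2 \<le> rd C p \<and> cd C q = 1)"
    and ri: "\<exists>q. (i,q) \<in> C" and ri': "\<exists>q. (i',q) \<in> C"
    and cj: "\<exists>p. (p,j) \<in> C" and cj': "\<exists>p. (p,j') \<in> C"
    and ne: "i \<noteq> i'" "j \<noteq> j'"
    and bl: "blk C i i' j j'"
  shows False
proof -
  have B: "(p,q) \<in> C \<Longrightarrow> p = i \<or> p = i' \<or> q = j \<or> q = j' \<Longrightarrow> (p = i \<or> p = i') \<and> (q = j \<or> q = j')" for p q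
    using bl unfolding blk_def by blast
  obtain q where q: "(i,q) \<in> C" using ri by blast
  have qj: "q = j \<or> q = j'" using B[OF q] by simp
  show False
  proof (cases "rd C i = 1 \<and> 2 \<le> cd C q")
    case True
    have "{p. (p,q) \<in> C} \<subseteq> {i,i'}" using B qj by auto
    then have iq: "(i',q) \<in> C" using sub2[of "{p. (p,q) \<in> C}" i i'] True by (simp add: cd_def)
    have ri'1: "rd C i' = 1" using st[OF iq] True by auto
    obtain q' where q'd: "q' \<noteq> q" "q' = j \<or> q' = j'" using qj ne by auto
    obtain p where p: "(p,q') \<in> C" using cj cj' q'd by blast
    have "p = i \<or> p = i'" using B[OF p] q'd by simp
    then show False
    proof
      assume "p = i" then show False using rd1[OF _ q p[unfolded \<open>p = i\<close>]] True q'd by simp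
    next
      assume "p = i'" then show False using rd1[OF ri'1 iq p[unfolded \<open>p = i'\<close>]] q'd by simp
    qed
  next
    case False
    then have r2: "2 \<le> rd C i" using st[OF q] by auto
    have "{q. (i,q) \<in> C} \<subseteq> {j,j'}" using B by auto
    then have both: "(i,j) \<in> C" "(i,j') \<in> C" using sub2[of "{q. (i,q) \<in> C}" j j'] r2 by (auto simp: rd_def)
    obtain q'' where q'': "(i',q'') \<in> C" using ri' by blast
    have "q'' = j \<or> q'' = j'" using B[OF q''] by simp
    then have iq: "(i,q'') \<in> C" using both by auto
    have "cd C q'' = 1" using st[OF iq] r2 by auto
    then show False using cd1[OF _ iq q''] ne by simp
  qed
qed



definition C0 :: "nat \<Rightarrow> nat \<Rightarrow> (nat\<times>nat) set" where
 "C0 a b = {(i,j). (1 \<le> j \<and> j \<le> a \<and> (i = j \<or> i = j + a))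
     \<or> (2*a+1 \<le> i \<and> i \<le> 2*a+b \<and> (i = j + a \<or> i + b = j + a))
     \<or> (i = 2*a+b+1 \<and> a+2*b+1 \<le> j \<and> j \<le> a+2*b+3)}"

lemma C0_sub: "C0 a b \<subseteq> {1..2*a+b+1}\<times>{1..a+2*b+3}"
  by (auto simp: C0_def)

lemma C0_fin: "finite (C0 a b)"
  using C0_sub by (rule finite_subset) simp

lemma rs1: "1 \<le> i \<Longrightarrow> i \<le> a \<Longrightarrow> {j. (i,j) \<in> C0 a b} = {i}"
  by (auto simp: C0_def)
lemma rs2: "a < i \<Longrightarrow> i \<le> 2*a \<Longrightarrow> {j. (i,j) \<in> C0 a b} = {i - a}"
  by (auto simp: C0_def)
lemma rs3: "2*a < i \<Longrightarrow> i \<le> 2*a+b \<Longrightarrow> (i, i - a) \<in> C0 a b \<and> (i, i + b - a) \<in> C0 a b"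
  by (auto simp: C0_def)
lemma rs4: "(2*a+b+1, a+2*b+1) \<in> C0 a b \<and> (2*a+b+1, a+2*b+2) \<in> C0 a b"
  by (auto simp: C0_def)
lemma cs1: "1 \<le> j \<Longrightarrow> j \<le> a \<Longrightarrow> {i. (i,j) \<in> C0 a b} = {j, j+a}"
  by (auto simp: C0_def)
lemma cs2: "a < j \<Longrightarrow> j \<le> a+b \<Longrightarrow> {i. (i,j) \<in> C0 a b} = {j+a}"
  by (auto simp: C0_def)
lemma cs3: "a + b < j \<Longrightarrow> j \<le> a+2*b \<Longrightarrow> {i. (i,j) \<in> C0 a b} = {j+a-b}"
  by (auto simp: C0_def)
lemma cs4: "a + 2*b < j \<Longrightarrow> j \<le> a+2*b+3 \<Longrightarrow> {i. (i,j) \<in> C0 a b} = {2*a+b+1}"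
  by (auto simp: C0_def)

lemma rd_C0_1: "1 \<le> i \<Longrightarrow> i \<le> 2*a \<Longrightarrow> rd (C0 a b) i = 1"
proof -
  assume "1 \<le> i" "i \<le> 2*a"
  then show ?thesis by (cases "i \<le> a") (simp_all add: rd_def rs1 rs2)
qed

lemma rd_C0_2: "1 \<le> b \<Longrightarrow> 2*a < i \<Longrightarrow> i \<le> 2*a+b+1 \<Longrightarrow> 2 \<le> rd (C0 a b) i"
proof -
  assume h: "1 \<le> b" "2*a < i" "i \<le> 2*a+b+1"
  show ?thesis
  proof (cases "i = 2*a+b+1")
    case True
    then show ?thesis unfolding rd_def using rs4[of a b]
      by (intro two_le_card[of _ "a+2*b+1" "a+2*b+2"]) (auto intro: fin_rs C0_fin)
  next
    case False
    then have "i \<le> 2*a+b" using h by simp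
    then show ?thesis unfolding rd_def using rs3[of a i b] h
      by (intro two_le_card[of _ "i - a" "i + b - a"]) (auto intro: fin_rs C0_fin)
  qed
qed

lemma cd_C0_2: "1 \<le> j \<Longrightarrow> j \<le> a \<Longrightarrow> cd (C0 a b) j = 2"
  by (simp add: cd_def cs1)

lemma cd_C0_1: "a < j \<Longrightarrow> j \<le> a+2*b+3 \<Longrightarrow> cd (C0 a b) j = 1"
proof -
  assume h: "a < j" "j \<le> a+2*b+3"
  consider "j \<le> a+b" | "a+b < j \<and> j \<le> a+2*b" | "a+2*b < j" using h by linarith
  then show ?thesis
  proof cases
    case 1 then show ?thesis using h by (simp add: cd_def cs2)
  next
    case 2 then show ?thesis using h by (simp add: cd_def cs3)
  next
    case 3 then show ?thesis using h by (simp add: cd_def cs4)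
  qed
qed

lemma C0_star: "1 \<le> b \<Longrightarrow> (p,q) \<in> C0 a b \<Longrightarrow>
    (rd (C0 a b) p = 1 \<and> 2 \<le> cd (C0 a b) q) \<or> (2 \<le> rd (C0 a b) p \<and> cd (C0 a b) q = 1)"
proof -
  assume b: "1 \<le> b" and pq: "(p,q) \<in> C0 a b"
  have "(p,q) \<in> {1..2*a+b+1}\<times>{1..a+2*b+3}" using C0_sub[of a b] pq by blast
  then have r: "1 \<le> p \<and> p \<le> 2*a+b+1 \<and> 1 \<le> q \<and> q \<le> a+2*b+3" by simp
  show ?thesis
  proof (cases "p \<le> 2*a")
    case True
    then have "q \<le> a" using pq by (auto simp: C0_def)
    then show ?thesis using True r rd_C0_1 cd_C0_2 by simp
  next
    case False
    then have "a < q" using pq by (auto simp: C0_def)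
    then show ?thesis using False r rd_C0_2[OF b] cd_C0_1 by simp
  qed
qed

lemma C0_rows: "1 \<le> i \<Longrightarrow> i \<le> 2*a+b+1 \<Longrightarrow> \<exists>q. (i,q) \<in> C0 a b"
proof -
  assume h: "1 \<le> i" "i \<le> 2*a+b+1"
  consider "i \<le> a" | "a < i \<and> i \<le> 2*a" | "2*a < i \<and> i \<le> 2*a+b" | "i = 2*a+b+1" using h by linarith
  then show ?thesis
  proof cases
    case 1 then show ?thesis using rs1[of i a b] h by auto
  next
    case 2 then show ?thesis using rs2[of a i b] by auto
  next
    case 3 then show ?thesis using rs3[of a i b] by auto
  next
    case 4 then show ?thesis using rs4[of a b] by auto
  qed
qed

lemma C0_cols: "1 \<le> j \<Longrightarrow> j \<le> a+2*b+3 \<Longrightarrow> \<exists>p. (p,j) \<in> C0 a b"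
proof -
  assume h: "1 \<le> j" "j \<le> a+2*b+3"
  consider "j \<le> a" | "a < j \<and> j \<le> a+b" | "a+b < j \<and> j \<le> a+2*b" | "a+2*b < j" using h by linarith
  then show ?thesis
  proof cases
    case 1 then show ?thesis using cs1[of j a b] h by auto
  next
    case 2 then show ?thesis using cs2[of a j b] by auto
  next
    case 3 then show ?thesis using cs3[of a b j] by auto
  next
    case 4 then show ?thesis using cs4[of a b j] h by auto
  qed
qed

lemma C0_card: "card (C0 a b) = 2*a + 2*b + 3"
proof -
  have "C0 a b = {e \<in> C0 a b. snd e \<in> {1..a+2*b+3}}"
  proof -
    have "e \<in> C0 a b \<Longrightarrow> snd e \<in> {1..a+2*b+3}" for e
    proof -
      assume "e \<in> C0 a b"
      then have "e \<in> {1..2*a+b+1}\<times>{1..a+2*b+3}" using C0_sub[of a b] by blast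
      then show ?thesis by (auto simp: mem_Times_iff)
    qed
    then show ?thesis by blast
  qed
  then have "card (C0 a b) = card {e \<in> C0 a b. snd e \<in> {1..a+2*b+3}}"
    by (rule arg_cong[where f=card])
  also have "\<dots> = (\<Sum>j\<in>{1..a+2*b+3}. cd (C0 a b) j)"
    by (rule sum_cd[OF C0_fin]) simp
  also have "{1..a+2*b+3} = {1..a} \<union> {a+1..a+2*b+3}" by auto
  also have "(\<Sum>j\<in>{1..a} \<union> {a+1..a+2*b+3}. cd (C0 a b) j)
      = (\<Sum>j\<in>{1..a}. cd (C0 a b) j) + (\<Sum>j\<in>{a+1..a+2*b+3}. cd (C0 a b) j)"
    by (rule sum.union_disjoint) auto
  also have "(\<Sum>j\<in>{1..a}. cd (C0 a b) j) = (\<Sum>j\<in>{1..a}. 2)"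
    by (rule sum.cong) (auto simp: cd_C0_2)
  also have "(\<Sum>j\<in>{a+1..a+2*b+3}. cd (C0 a b) j) = (\<Sum>j\<in>{a+1..a+2*b+3}. 1)"
    by (rule sum.cong) (auto simp: cd_C0_1)
  finally show ?thesis by simp
qed

lemma three_dom:
  assumes "(r1,c1) \<in> C" "(r2,c2) \<in> C" "(r3,c3) \<in> C"
    "r1 \<noteq> r2" "r1 \<noteq> r3" "r2 \<noteq> r3" "c1 \<noteq> c2" "c1 \<noteq> c3" "c2 \<noteq> c3"
  shows "NC C x \<noteq> {}"
proof -
  obtain p q where x: "x = (p,q)" by (cases x)
  have "\<exists>c\<in>C. fst x \<noteq> fst c \<and> snd x \<noteq> snd c"
  proof (cases "p \<noteq> r1 \<and> q \<noteq> c1")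
    case True then show ?thesis using assms(1) x by force
  next
    case False
    show ?thesis
    proof (cases "p \<noteq> r2 \<and> q \<noteq> c2")
      case True then show ?thesis using assms(2) x by force
    next
      case False2: False
      have "p \<noteq> r3 \<and> q \<noteq> c3" using False False2 assms(4-9) by auto
      then show ?thesis using assms(3) x by force
    qed
  qed
  then show ?thesis unfolding NC_def by blast
qed

lemma C0_id:
  assumes a: "1 \<le> a" and b: "1 \<le> b"
  shows "is_id_code ({1..2*a+b+1}\<times>{1..a+2*b+3}) (\<lambda>u v. fst u \<noteq> fst v \<and> snd u \<noteq> snd v) (C0 a b)"
proof -
  have c1: "(1,1) \<in> C0 a b" using a by (auto simp: C0_def)
  have c2: "(2*a+1, a+1) \<in> C0 a b" using b by (auto simp: C0_def)
  have c3: "(2*a+b+1, a+2*b+3) \<in> C0 a b" by (auto simp: C0_def)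
  have dom: "\<forall>x\<in>{1..2*a+b+1}\<times>{1..a+2*b+3}. NC (C0 a b) x \<noteq> {}"
    using three_dom[OF c1 c2 c3] a b by auto
  have sep: "\<forall>x\<in>{1..2*a+b+1}\<times>{1..a+2*b+3}. \<forall>y\<in>{1..2*a+b+1}\<times>{1..a+2*b+3}. x \<noteq> y \<longrightarrow> NC (C0 a b) x \<noteq> NC (C0 a b) y"
  proof (intro ballI impI notI)
    fix x y assume xV: "x \<in> {1..2*a+b+1}\<times>{1..a+2*b+3}" and yV: "y \<in> {1..2*a+b+1}\<times>{1..a+2*b+3}"
      and xy: "x \<noteq> y" and eq: "NC (C0 a b) x = NC (C0 a b) y"
    have rx: "\<exists>q. (fst x,q) \<in> C0 a b" "\<exists>q. (fst y,q) \<in> C0 a b" using C0_rows xV yV by auto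
    have cx: "\<exists>p. (p,snd x) \<in> C0 a b" "\<exists>p. (p, snd y) \<in> C0 a b" using C0_cols xV yV by auto
    show False
      using sep_conv[OF eq xy] rx cx noblk[OF C0_fin C0_star[OF b] rx cx] by blast
  qed
  show ?thesis using id_iff[OF C0_sub] dom sep by blast
qed



theorem theorem5:
  fixes n m :: nat
  assumes "6 \<le> n" and "n \<le> m" and "m \<le> 2 * n - 2" and "m \<noteq> 2 * n - 5"
    and "(n + m) mod 3 = 1"
  shows "int (id_code_number (direct_prod_verts (K_verts n) (K_verts m))
                             (direct_prod_adj K_adj K_adj))
         = ceiling ((2 * real m + 2 * real n) / 3)"
proof -
  define E :: "nat\<times>nat \<Rightarrow> nat\<times>nat \<Rightarrow> bool" where "E = (\<lambda>u v. fst u \<noteq> fst v \<and> snd u \<noteq> snd v)"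
  define V where "V = {1..n}\<times>{1..m}"
  obtain t where t: "n + m = 3*t+1" using assms(5) by (metis div_mult_mod_eq add.commute mult.commute)
  define a where "a = n - t"
  define b where "b = 2*t - n - 1"
  have m2: "m + 2 \<le> 2*n" using assms(1,3) by linarith
  have tn: "t + 1 \<le> n" using t m2 by linarith
  have tb: "n + 2 \<le> 2*t" using t assms(1,2) by presburger
  have at: "a + t = n" using tn unfolding a_def by simp
  have bt: "b + n + 1 = 2*t" using tb unfolding b_def by simp
  have ab: "1 \<le> a" "1 \<le> b" "n = 2*a+b+1" "m = a+2*b+3"
    using at bt tn tb t by linarith+
  have ex: "is_id_code V E (C0 a b) \<and> card (C0 a b) = 2*t+1"
  proof
    show "is_id_code V E (C0 a b)" unfolding V_def E_def using C0_id[OF ab(1,2)] ab(3,4) by simp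
    show "card (C0 a b) = 2*t+1" using C0_card[of a b] ab t by simp
  qed
  have low: "2*t+1 \<le> card C" if C: "is_id_code V E C" for C
  proof -
    have CV: "C \<subseteq> V" using C by (simp add: is_id_code_def)
    have I: "\<forall>x\<in>V. \<forall>y\<in>V. x \<noteq> y \<longrightarrow> NC C x \<noteq> NC C y"
      using C id_iff[OF CV] unfolding E_def by blast
    have m1: "1 \<le> m" using assms by simp
    have "2*(n+m)+1 \<le> 3*card C"
    proof (rule lower[OF CV[unfolded V_def] _ _ _ assms])
      fix i i' assume h: "i\<in>{1..n}" "i'\<in>{1..n}" "i\<noteq>i'" "\<forall>j. (i,j)\<notin>C" "\<forall>j. (i',j)\<notin>C"
      have "NC C (i,1) = NC C (i',1)" by (rule sep_rows[OF h(4,5)])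
      moreover have "(i,1) \<in> V" "(i',1) \<in> V" using h m1 by (auto simp: V_def)
      ultimately show False using I h(3) by blast
    next
      fix j j' assume h: "j\<in>{1..m}" "j'\<in>{1..m}" "j\<noteq>j'" "\<forall>i. (i,j)\<notin>C" "\<forall>i. (i,j')\<notin>C"
      have "NC C (1,j) = NC C (1,j')" by (rule sep_cols[OF h(4,5)])
      moreover have "(1,j) \<in> V" "(1,j') \<in> V" using h assms(1) by (auto simp: V_def)
      ultimately show False using I h(3) by blast
    next
      fix i i' j j' assume h: "i\<in>{1..n}" "i'\<in>{1..n}" "j\<in>{1..m}" "j'\<in>{1..m}" "i\<noteq>i'" "j\<noteq>j'" "blk C i i' j j'"
      have "NC C (i,j) = NC C (i',j')" by (rule sep_blk[OF h(7,5,6)])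
      moreover have "(i,j) \<in> V" "(i',j') \<in> V" using h by (auto simp: V_def)
      ultimately show False using I h(5) by blast
    qed
    then have "3*(2*t+1) \<le> 3*card C" using t by simp
    then show ?thesis by simp
  qed
  have L: "id_code_number V E = 2*t+1"
    unfolding id_code_number_def
  proof (rule Least_equality)
    show "\<exists>C. is_id_code V E C \<and> card C = 2*t+1" using ex by blast
  next
    fix k assume "\<exists>C. is_id_code V E C \<and> card C = k"
    then show "2*t+1 \<le> k" using low by blast
  qed
  have rr: "real m + real n = 3 * real t + 1" using t by (metis add.commute of_nat_add of_nat_1 of_nat_mult of_nat_numeral)
  have "ceiling ((2 * real m + 2 * real n) / 3) = int (2*t+1)"
    by (rule ceiling_unique) (use rr in \<open>simp_all add: field_simps\<close>)
  then show ?thesis using L unfolding V_def E_def verts_eq adj_eq by simp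
qed

end
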